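(* Let $R$ be a generalized Rickart $*$-ring and let $B$ be a $*$-subring of $R$ such that (1) $B$ has a unity element, and (2) for every $x\in B$, $GRP(x)\in B$ (where $GRP(x)$ is a generalized right projection of $x$ in $R$). Then $B$ is a generalized Rickart $*$-ring.
   Context: A $*$-ring is an associative ring $R$ with an involution $x\mapsto x^*$ (additive, $(xy)^*=y^*x^*$, $x^{**}=x$); a $*$-subring is a subring closed under $*$. A projection is an element $e$ with $e=e^*=e^2$. For $a$ in a ring $S$, $r(a)=\{b\in S: ab=0\}$. A $*$-ring $S$ is a generalized Rickart $*$-ring if for every $x\in S$ there exist a positive integer $n$ and a projection $g\in S$ with $r(x^n)=gS$. A projection $e\in R$ is a generalized right projection of $x\in R$, written $GRP(x)=e$, if there exists $n\in\mathbb N$ with $x^ne=x^n$ and, for all $y\in R$, $x^ny=0$ implies $ey=0$. *)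

theory Defs
  imports Main
begin

text \<open>Rings are the (not necessarily unital) associative rings of class ring.
  The involution is an explicit function.\<close>

definition star_ring :: "('a::ring \<Rightarrow> 'a) \<Rightarrow> bool" where
  "star_ring st \<longleftrightarrow> (\<forall>x y. st (x + y) = st x + st y) \<and>
     (\<forall>x y. st (x * y) = st y * st x) \<and> (\<forall>x. st (st x) = x)"

definition star_subring :: "('a::ring \<Rightarrow> 'a) \<Rightarrow> 'a set \<Rightarrow> bool" where
  "star_subring st B \<longleftrightarrow> 0 \<in> B \<and> (\<forall>x\<in>B. \<forall>y\<in>B. x + y \<in> B \<and> x * y \<in> B) \<and>
     (\<forall>x\<in>B. - x \<in> B \<and> st x \<in> B)"

text \<open>Positive powers (no unity needed): ppow x n = x^n for n >= 1
  (the value at n = 0 is irrelevant and never used).\<close>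
fun ppow :: "'a::times \<Rightarrow> nat \<Rightarrow> 'a" where
  "ppow x 0 = x"
| "ppow x (Suc 0) = x"
| "ppow x (Suc (Suc n)) = x * ppow x (Suc n)"

definition is_projection :: "('a::ring \<Rightarrow> 'a) \<Rightarrow> 'a \<Rightarrow> bool" where
  "is_projection st e \<longleftrightarrow> e = st e \<and> e * e = e"

text \<open>A *-ring with carrier S (S = UNIV for the whole ring, or a *-subring)
  is a generalized Rickart *-ring: for every x in S there are n >= 1 and a
  projection g in S with r(x^n) = gS, annihilator computed in S.\<close>
definition gen_rickart_on :: "('a::ring \<Rightarrow> 'a) \<Rightarrow> 'a set \<Rightarrow> bool" where
  "gen_rickart_on st S \<longleftrightarrow> (\<forall>x\<in>S. \<exists>n>0. \<exists>g\<in>S. is_projection st g \<and>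
      {y\<in>S. ppow x n * y = 0} = {g * s | s. s \<in> S})"

definition is_GRP :: "('a::ring \<Rightarrow> 'a) \<Rightarrow> 'a \<Rightarrow> 'a \<Rightarrow> bool" where
  "is_GRP st x e \<longleftrightarrow> is_projection st e \<and>
     (\<exists>n>0. ppow x n * e = ppow x n \<and> (\<forall>y. ppow x n * y = 0 \<longrightarrow> e * y = 0))"

end

theory Submission
  imports Defs
begin

lemma ppow_in:
  assumes "\<forall>x\<in>B. \<forall>y\<in>B. x + y \<in> B \<and> x * y \<in> B" and "x \<in> B"
  shows "ppow x n \<in> B"
  using assms by (induction x n rule: ppow.induct) auto

theorem mainTheorem4:
  fixes st :: "'a::ring \<Rightarrow> 'a" and B :: "'a set"
  assumes "star_ring st"
    and "gen_rickart_on st UNIV"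
    and "star_subring st B"
    and "\<exists>u\<in>B. \<forall>b\<in>B. u * b = b \<and> b * u = b"
    and "\<forall>x\<in>B. \<exists>e\<in>B. is_GRP st x e"
  shows "gen_rickart_on st B"
  unfolding gen_rickart_on_def
proof
  fix x assume xB: "x \<in> B"
  from assms(4) obtain u where uB: "u \<in> B" and u: "\<And>b. b \<in> B \<Longrightarrow> u * b = b \<and> b * u = b" by blast
  from assms(5) xB obtain e where eB: "e \<in> B" and ge: "is_GRP st x e" by blast
  from ge obtain n where n: "n > 0" "ppow x n * e = ppow x n"
    and ann: "\<And>y. ppow x n * y = 0 \<Longrightarrow> e * y = 0" and pe: "is_projection st e"
    unfolding is_GRP_def by blast
  have cl: "\<forall>x\<in>B. \<forall>y\<in>B. x + y \<in> B \<and> x * y \<in> B" and neg: "\<And>x. x \<in> B \<Longrightarrow> - x \<in> B \<and> st x \<in> B"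
    using assms(3) unfolding star_subring_def by auto
  have sr: "\<And>x y. st (x + y) = st x + st y" "\<And>x y. st (x * y) = st y * st x" "\<And>x. st (st x) = x"
    using assms(1) unfolding star_ring_def by auto
  have stneg: "st (- y) = - st y" for y
  proof -
    have "st (- y) + st y = st 0" using sr(1)[of "-y" y] by simp
    moreover have "st 0 = 0" using sr(1)[of 0 0] by simp
    ultimately show ?thesis by (simp add: eq_neg_iff_add_eq_0)
  qed
  have stu: "st u = u"
  proof -
    have "u * st u = st u" using u neg uB by blast
    hence "st (u * st u) = u" using sr(3) by simp
    moreover have "st (u * st u) = u * st u" using sr by simp
    ultimately show ?thesis using \<open>u * st u = st u\<close> by simp
  qed
  have ste: "st e = e" and ee: "e * e = e" using pe unfolding is_projection_def by auto
  define g where "g = u - e"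
  have gB: "g \<in> B" unfolding g_def diff_conv_add_uminus using cl neg[OF eB] uB by blast
  have "st g = g" unfolding g_def diff_conv_add_uminus by (simp only: sr(1) stneg stu ste)
  moreover have "g * g = g" unfolding g_def using u[OF eB] u[OF uB] ee
    by (simp add: algebra_simps del: ) 
  ultimately have pg: "is_projection st g" unfolding is_projection_def by simp
  have pB: "ppow x n \<in> B" using ppow_in[OF cl xB] .
  have "{y\<in>B. ppow x n * y = 0} = {g * s | s. s \<in> B}"
  proof (intro set_eqI iffI)
    fix y assume "y \<in> {y\<in>B. ppow x n * y = 0}"
    hence yB: "y \<in> B" and "ppow x n * y = 0" by auto
    hence "e * y = 0" using ann by blast
    hence "g * y = y" unfolding g_def using u[OF yB] by (simp add: algebra_simps)
    thus "y \<in> {g * s | s. s \<in> B}" using yB by force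
  next
    fix y assume "y \<in> {g * s | s. s \<in> B}"
    then obtain s where sB: "s \<in> B" and y: "y = g * s" by blast
    have "ppow x n * u = ppow x n" using u[OF pB] by simp
    hence "ppow x n * y = 0" unfolding y g_def using n(2)
      by (simp add: algebra_simps mult.assoc[symmetric])
    moreover have "y \<in> B" using y cl gB sB by blast
    ultimately show "y \<in> {y\<in>B. ppow x n * y = 0}" by simp
  qed
  thus "\<exists>n>0. \<exists>g\<in>B. is_projection st g \<and> {y\<in>B. ppow x n * y = 0} = {g * s | s. s \<in> B}"
    using n(1) gB pg by blast
qed

end
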